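(* If $ck+cj+1 \ge n \ge c+1$, then $g(j, k, n)=1$.
   Context: Let $c \ge 1$ and consider permutations in $S_n$ written in one-line notation. The order permutation (standardization) of a word $w$ with distinct letters is the unique permutation $\pi$ of the same length with $\pi_i<\pi_j$ iff $w_i<w_j$. Let $K$ be the set partition of $S_{c+1}$ with exactly two nontrivial parts, $\{ x \mid x\in S_{c+1},\ x_1=1 \}$ and $\{ x \mid x\in S_{c+1},\ x_{c+1}=1 \}$ (all other permutations of $S_{c+1}$ form singleton parts). The $K$-equivalence on $S_n$ is the equivalence relation generated by declaring $aub \equiv avb$ whenever $a,b,u,v$ are words, $u,v$ have length $c+1$, and the order permutations of $u$ and $v$ lie in the same part of $K$; i.e. one may rearrange any $c+1$ consecutive letters whose smallest letter is first so that the smallest letter stays first, and likewise for blocks whose smallest letter is last. Equivalence classes are with respect to this relation. Definition ($j,k$-squished): choose $j$ letters $l_1<l_2<\cdots<l_j$ among $1,\ldots,j+k$, and let $r_1<r_2<\cdots<r_k$ be the remaining $k$ letters among $1,\ldots,j+k$. A permutation is $j,k$-squished (for this choice) if, for each $i\le j$, $l_i$ is among the first $c(i-1)+1$ positions, and for each $i\le k$, $r_i$ is among the final $c(i-1)+1$ positions. $g(j,k,n)$ denotes the number of equivalence classes in $S_n$ (under this $K$-equivalence) containing permutations that are $j,k$-squished for a given choice of $l_1,\ldots,l_j$ and $r_1,\ldots,r_k$. *)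

theory Defs
  imports "HOL-Combinatorics.Multiset_Permutations"
begin

abbreviation Sn :: "nat \<Rightarrow> nat list set" where
  "Sn n \<equiv> permutations_of_set {1..n}"

definition std :: "nat list \<Rightarrow> nat list" where
  "std w = map (\<lambda>x. card {y \<in> set w. y < x} + 1) w"

text \<open>The two nontrivial parts of the set partition K of S_(c+1).\<close>
definition Kfirst :: "nat \<Rightarrow> nat list set" where
  "Kfirst c = {x \<in> Sn (Suc c). x ! 0 = 1}"

definition Klast :: "nat \<Rightarrow> nat list set" where
  "Klast c = {x \<in> Sn (Suc c). x ! c = 1}"

definition same_part :: "nat \<Rightarrow> nat list \<Rightarrow> nat list \<Rightarrow> bool" where
  "same_part c p q \<longleftrightarrow> p = q \<or> (p \<in> Kfirst c \<and> q \<in> Kfirst c) \<or> (p \<in> Klast c \<and> q \<in> Klast c)"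

definition Kstep :: "nat \<Rightarrow> nat list \<Rightarrow> nat list \<Rightarrow> bool" where
  "Kstep c w w' \<longleftrightarrow> (\<exists>a b u v. w = a @ u @ b \<and> w' = a @ v @ b \<and>
      length u = Suc c \<and> length v = Suc c \<and> same_part c (std u) (std v))"

definition Kequiv :: "nat \<Rightarrow> nat \<Rightarrow> nat list \<Rightarrow> nat list \<Rightarrow> bool" where
  "Kequiv c n w w' \<longleftrightarrow> w \<in> Sn n \<and> w' \<in> Sn n \<and>
     (\<lambda>x y. x \<in> Sn n \<and> y \<in> Sn n \<and> (Kstep c x y \<or> Kstep c y x))\<^sup>*\<^sup>* w w'"

definition Kclass :: "nat \<Rightarrow> nat \<Rightarrow> nat list \<Rightarrow> nat list set" where
  "Kclass c n w = {v. Kequiv c n w v}"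

text \<open>j,k-squished for the choice L = {l_1 < ... < l_j} \<subseteq> {1..j+k};
  R = {1..j+k} - L = {r_1 < ... < r_k}. Indices i are 0-based here, positions 0-based:
  l_(i+1) among the first c*i+1 positions, r_(i+1) among the last c*i+1 positions.\<close>
definition squished :: "nat \<Rightarrow> nat \<Rightarrow> nat \<Rightarrow> nat set \<Rightarrow> nat list \<Rightarrow> bool" where
  "squished c j k L w \<longleftrightarrow>
     (\<forall>i < j. \<exists>p < length w. p < c * i + 1 \<and> w ! p = sorted_list_of_set L ! i) \<and>
     (\<forall>i < k. \<exists>p < length w. length w - (c * i + 1) \<le> p \<and>
                w ! p = sorted_list_of_set ({1..j+k} - L) ! i)"

definition g :: "nat \<Rightarrow> nat \<Rightarrow> nat \<Rightarrow> nat \<Rightarrow> nat set \<Rightarrow> nat" where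
  "g c j k n L = card (Kclass c n ` {w \<in> Sn n. squished c j k L w})"

end

theory Submission
  imports Defs
begin

definition swp :: "nat \<Rightarrow> nat \<Rightarrow> 'a list \<Rightarrow> 'a list" where
  "swp i j xs = xs[i := xs!j, j := xs!i]"

lemma swp_length[simp]: "length (swp i j xs) = length xs"
  by (simp add: swp_def)

lemma swp_nth: "i < length xs \<Longrightarrow> j < length xs \<Longrightarrow> k < length xs \<Longrightarrow>
  swp i j xs ! k = (if k = j then xs!i else if k = i then xs!j else xs!k)"
  by (auto simp: swp_def nth_list_update)

lemma swp_set[simp]: "i < length xs \<Longrightarrow> j < length xs \<Longrightarrow> set (swp i j xs) = set xs"
  by (simp add: swp_def)

lemma swp_distinct[simp]: "i < length xs \<Longrightarrow> j < length xs \<Longrightarrow> distinct (swp i j xs) = distinct xs"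
  by (simp add: swp_def)

lemma swp_same[simp]: "swp i i xs = xs"
  by (simp add: swp_def)

lemma swp_comm: "swp i j xs = swp j i xs"
  by (cases "i = j") (auto simp: swp_def list_update_swap)

lemma swp_conj: assumes "i < length xs" "j < length xs" "k < length xs" "i \<noteq> j" "j \<noteq> k" "i \<noteq> k"
  shows "swp i j (swp j k (swp i j xs)) = swp i k xs"
  by (rule nth_equalityI) (use assms in \<open>auto simp: swp_nth\<close>)

lemma swp_conj2: assumes "i < length xs" "j < length xs" "k < length xs" "l < length xs"
  "k \<noteq> i" "k \<noteq> j" "l \<noteq> i" "l \<noteq> j"
  shows "swp i j (swp k l (swp i j xs)) = swp k l xs"
  by (rule nth_equalityI) (use assms in \<open>auto simp: swp_nth\<close>)

lemma swp_rev: assumes "i < length xs" "j < length xs"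
  shows "rev (swp i j xs) = swp (length xs - 1 - i) (length xs - 1 - j) (rev xs)"
  by (rule nth_equalityI) (use assms in \<open>auto simp: swp_nth rev_nth\<close>)

lemma swp_Cons: "swp (Suc i) (Suc j) (m # xs) = m # swp i j xs"
  by (simp add: swp_def)

lemma std_perm: assumes "distinct u" shows "std u \<in> permutations_of_set {1..length u}"
proof -
  define r where "r = (\<lambda>x. card {y \<in> set u. y < x} + 1)"
  have std: "std u = map r u" by (simp add: std_def r_def)
  have mono: "r x < r x'" if "x \<in> set u" "x' \<in> set u" "x < x'" for x x'
  proof -
    have "{y \<in> set u. y < x} \<subset> {y \<in> set u. y < x'}" using that by auto
    then show ?thesis unfolding r_def by (simp add: psubset_card_mono)
  qed
  have inj: "inj_on r (set u)"
    by (rule inj_onI) (metis linorder_neqE_nat mono less_irrefl)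
  have rng: "r ` set u \<subseteq> {1..length u}"
  proof
    fix z assume "z \<in> r ` set u"
    then obtain x where x: "x \<in> set u" "z = r x" by auto
    have "{y \<in> set u. y < x} \<subset> set u" using x by auto
    then have "card {y \<in> set u. y < x} < card (set u)" by (simp add: psubset_card_mono)
    then show "z \<in> {1..length u}" using x distinct_card[OF assms] by (simp add: r_def)
  qed
  have "card (r ` set u) = length u" using inj distinct_card[OF assms] by (simp add: card_image)
  then have "r ` set u = {1..length u}" using rng by (intro card_subset_eq) auto
  moreover have "distinct (map r u)" using inj assms by (simp add: distinct_map)
  ultimately show ?thesis by (simp add: std permutations_of_set_def)
qed

lemma std_nth: "i < length u \<Longrightarrow> std u ! i = card {y \<in> set u. y < u!i} + 1"
  by (simp add: std_def)

lemma std_Kfirst: assumes "distinct u" "length u = Suc c" "\<And>i. 0 < i \<Longrightarrow> i < length u \<Longrightarrow> u!0 < u!i"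
  shows "std u \<in> Kfirst c"
proof -
  have "{y \<in> set u. y < u!0} = {}"
    using assms by (auto simp: in_set_conv_nth) (metis gr0I less_asym)
  then show ?thesis using std_perm[OF assms(1)] assms(2) by (simp add: Kfirst_def std_nth)
qed

lemma std_Klast: assumes "distinct u" "length u = Suc c" "\<And>i. i < c \<Longrightarrow> u!c < u!i"
  shows "std u \<in> Klast c"
proof -
  have "{y \<in> set u. y < u!c} = {}"
    using assms by (auto simp: in_set_conv_nth) (metis less_SucE less_asym)
  then show ?thesis using std_perm[OF assms(1)] assms(2) by (simp add: Klast_def std_nth)
qed

definition KF :: "nat \<Rightarrow> nat list \<Rightarrow> nat \<Rightarrow> nat \<Rightarrow> nat \<Rightarrow> bool" where
  "KF c x q s s' \<longleftrightarrow> (\<forall>i. q < i \<and> i \<le> q+c \<longrightarrow> x!q < x!i) \<and> q < s \<and> s \<le> q+c \<and> q < s' \<and> s' \<le> q+c"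

definition KL :: "nat \<Rightarrow> nat list \<Rightarrow> nat \<Rightarrow> nat \<Rightarrow> nat \<Rightarrow> bool" where
  "KL c x q s s' \<longleftrightarrow> (\<forall>i. q \<le> i \<and> i < q+c \<longrightarrow> x!(q+c) < x!i) \<and> q \<le> s \<and> s < q+c \<and> q \<le> s' \<and> s' < q+c"

definition Kswap :: "nat \<Rightarrow> nat list \<Rightarrow> nat list \<Rightarrow> bool" where
  "Kswap c x y \<longleftrightarrow> distinct x \<and> (\<exists>q s s'. q + c < length x \<and> y = swp s s' x \<and> (KF c x q s s' \<or> KL c x q s s'))"

lemma split3: "xs = take q xs @ take k (drop q xs) @ drop (q+k) xs"
  by (metis append_take_drop_id add.commute drop_drop)

lemma Kswap_Kstep: assumes "Kswap c x y" shows "Kstep c x y"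
proof -
  obtain q s s' where q: "q + c < length x" and y: "y = swp s s' x" and K: "KF c x q s s' \<or> KL c x q s s'"
    and d: "distinct x" using assms unfolding Kswap_def by blast
  have ss: "q \<le> s" "s \<le> q + c" "q \<le> s'" "s' \<le> q+c" using K by (auto simp: KF_def KL_def)
  have sl: "s < length x" "s' < length x" using ss q by auto
  define u where "u = take (Suc c) (drop q x)"
  define v where "v = take (Suc c) (drop q y)"
  have ly: "length y = length x" using y by simp
  have t: "take q y = take q x"
    by (rule nth_equalityI) (use q ss K in \<open>auto simp: y swp_nth KF_def KL_def\<close>)
  have dr: "drop (q + Suc c) y = drop (q + Suc c) x"
    by (rule nth_equalityI) (use q ss sl in \<open>auto simp: y swp_nth\<close>)
  have xe: "x = take q x @ u @ drop (q + Suc c) x" unfolding u_def by (rule split3)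
  have ye: "y = take q x @ v @ drop (q + Suc c) x" unfolding v_def by (metis split3 t dr)
  have lu: "length u = Suc c" "length v = Suc c" using q ly by (auto simp: u_def v_def)
  have un: "\<And>i. i < Suc c \<Longrightarrow> u!i = x!(q+i)" using q by (simp add: u_def)
  have vn: "\<And>i. i < Suc c \<Longrightarrow> v!i = y!(q+i)" using q ly by (simp add: v_def)
  have du: "distinct u" "distinct v" using d y sl by (auto simp: u_def v_def)
  have yn: "\<And>k. k < length x \<Longrightarrow> y!k = (if k = s' then x!s else if k = s then x!s' else x!k)"
    using y sl by (simp add: swp_nth)
  show ?thesis
  proof (cases "KF c x q s s'")
    case True
    then have m: "\<And>i. q < i \<Longrightarrow> i \<le> q+c \<Longrightarrow> x!q < x!i" and n: "q < s" "q < s'" by (auto simp: KF_def)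
    have "std u \<in> Kfirst c"
      by (rule std_Kfirst) (use du lu un m in auto)
    moreover have "std v \<in> Kfirst c"
    proof (rule std_Kfirst)
      fix i assume "0 < i" "i < length v"
      then show "v!0 < v!i" using lu vn yn m n ss q by auto
    qed (use du lu in auto)
    ultimately show ?thesis unfolding Kstep_def same_part_def using xe ye lu by blast
  next
    case False
    then have "KL c x q s s'" using K by simp
    then have m: "\<And>i. q \<le> i \<Longrightarrow> i < q+c \<Longrightarrow> x!(q+c) < x!i" and n: "s < q+c" "s' < q+c" by (auto simp: KL_def)
    have "std u \<in> Klast c"
      by (rule std_Klast) (use du lu un m in auto)
    moreover have "std v \<in> Klast c"
    proof (rule std_Klast)
      fix i assume "i < c"
      then show "v!c < v!i" using lu vn yn m n ss q by auto
    qed (use du lu in auto)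
    ultimately show ?thesis unfolding Kstep_def same_part_def using xe ye lu by blast
  qed
qed

definition Estep :: "nat \<Rightarrow> nat \<Rightarrow> nat \<Rightarrow> nat list \<Rightarrow> nat list \<Rightarrow> bool" where
  "Estep c a b x y \<longleftrightarrow> Kswap c x y \<or>
     (\<exists>s s'. s < a \<and> s' < a \<and> s < length x \<and> s' < length x \<and> y = swp s s' x) \<or>
     (\<exists>s s'. length x - b \<le> s \<and> length x - b \<le> s' \<and> s < length x \<and> s' < length x \<and> y = swp s s' x)"

definition Eq :: "nat \<Rightarrow> nat \<Rightarrow> nat \<Rightarrow> nat list \<Rightarrow> nat list \<Rightarrow> bool" where
  "Eq c a b = (\<lambda>x y. Estep c a b x y \<or> Estep c a b y x)\<^sup>*\<^sup>*"

lemma Kswap_swp: "Kswap c x y \<Longrightarrow> \<exists>s s'. s < length x \<and> s' < length x \<and> y = swp s s' x"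
  unfolding Kswap_def KF_def KL_def by (metis le_less_trans less_imp_le_nat order.strict_trans1)

lemma Estep_swp: "Estep c a b x y \<Longrightarrow> \<exists>s s'. s < length x \<and> s' < length x \<and> y = swp s s' x"
  unfolding Estep_def using Kswap_swp by blast

lemma Estep_pres: "Estep c a b x y \<Longrightarrow> set y = set x \<and> length y = length x \<and> distinct y = distinct x"
  using Estep_swp by fastforce

lemma Eq_refl[simp]: "Eq c a b x x" by (simp add: Eq_def)

lemma Eq_trans: "Eq c a b x y \<Longrightarrow> Eq c a b y z \<Longrightarrow> Eq c a b x z"
  unfolding Eq_def by (rule rtranclp_trans)

lemma Eq_sym: "Eq c a b x y \<Longrightarrow> Eq c a b y x"
  unfolding Eq_def
proof (induction rule: rtranclp_induct)
  case base then show ?case by simp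
next
  case (step y z)
  have "Estep c a b z y \<or> Estep c a b y z" using step(2) by auto
  then show ?case using step.IH converse_rtranclp_into_rtranclp[of "\<lambda>x y. Estep c a b x y \<or> Estep c a b y x" z y x]
    by blast
qed

lemma Eq_pres: "Eq c a b x y \<Longrightarrow> set y = set x \<and> length y = length x \<and> distinct y = distinct x"
  unfolding Eq_def
  by (induction rule: rtranclp_induct) (use Estep_pres in fastforce)+

lemma Eq_step: "Estep c a b x y \<Longrightarrow> Eq c a b x y"
  unfolding Eq_def by auto

lemma Eq_F: "s < a \<Longrightarrow> s' < a \<Longrightarrow> s < length x \<Longrightarrow> s' < length x \<Longrightarrow> Eq c a b x (swp s s' x)"
  by (rule Eq_step) (auto simp: Estep_def)

lemma Eq_B: "length x - b \<le> s \<Longrightarrow> length x - b \<le> s' \<Longrightarrow> s < length x \<Longrightarrow> s' < length x \<Longrightarrow> Eq c a b x (swp s s' x)"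
  by (rule Eq_step) (auto simp: Estep_def)

lemma Eq_K: "Kswap c x y \<Longrightarrow> Eq c a b x y"
  by (rule Eq_step) (auto simp: Estep_def)

lemma Kswap_rev: assumes "Kswap c x y" shows "Kswap c (rev x) (rev y)"
proof -
  obtain q s s' where q: "q + c < length x" and y: "y = swp s s' x" and K: "KF c x q s s' \<or> KL c x q s s'"
    and d: "distinct x" using assms unfolding Kswap_def by blast
  define n where "n = length x"
  define q' where "q' = n - 1 - (q + c)"
  have sl: "s < n" "s' < n" using K q by (auto simp: KF_def KL_def n_def)
  have ry: "rev y = swp (n - 1 - s) (n - 1 - s') (rev x)" using y sl swp_rev by (simp add: n_def)
  have q'c: "q' + c = n - 1 - q" using q by (simp add: q'_def n_def)
  have "KL c (rev x) q' (n - 1 - s) (n - 1 - s') \<or> KF c (rev x) q' (n - 1 - s) (n - 1 - s')"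
  proof (cases "KF c x q s s'")
    case True
    have "KL c (rev x) q' (n - 1 - s) (n - 1 - s')"
      unfolding KL_def
    proof (intro conjI allI impI)
      fix i assume i: "q' \<le> i \<and> i < q' + c"
      then have "q < n - 1 - i" "n - 1 - i \<le> q + c" using q q'c by (auto simp: n_def q'_def)
      then show "rev x ! (q' + c) < rev x ! i" using True i q q'c
        by (auto simp: KF_def rev_nth n_def q'c)
    qed (use True q sl in \<open>auto simp: KF_def q'_def n_def\<close>)
    then show ?thesis by simp
  next
    case False
    then have KL: "KL c x q s s'" using K by simp
    have "KF c (rev x) q' (n - 1 - s) (n - 1 - s')"
      unfolding KF_def
    proof (intro conjI allI impI)
      fix i assume i: "q' < i \<and> i \<le> q' + c"
      then have "q \<le> n - 1 - i" "n - 1 - i < q + c" using q q'c by (auto simp: n_def q'_def)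
      then show "rev x ! q' < rev x ! i" using KL i q q'c
        by (auto simp: KL_def rev_nth n_def q'_def)
    qed (use KL q sl in \<open>auto simp: KL_def q'_def n_def\<close>)
    then show ?thesis by simp
  qed
  moreover have "q' + c < length (rev x)" using q by (simp add: q'_def n_def)
  ultimately show ?thesis unfolding Kswap_def using d ry by auto
qed

lemma Estep_rev: assumes "Estep c a b x y" shows "Estep c b a (rev x) (rev y)"
proof -
  consider "Kswap c x y" | "\<exists>s s'. s < a \<and> s' < a \<and> s < length x \<and> s' < length x \<and> y = swp s s' x"
    | "\<exists>s s'. length x - b \<le> s \<and> length x - b \<le> s' \<and> s < length x \<and> s' < length x \<and> y = swp s s' x"
    using assms unfolding Estep_def by blast
  then show ?thesis
  proof cases
    case 1 then show ?thesis using Kswap_rev by (simp add: Estep_def)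
  next
    case 2
    then obtain s s' where h: "s < a" "s' < a" "s < length x" "s' < length x" "y = swp s s' x" by blast
    have r: "rev y = swp (length x - 1 - s) (length x - 1 - s') (rev x)" using h swp_rev by simp
    show ?thesis unfolding Estep_def
      apply (rule disjI2, rule disjI2)
      apply (rule exI[of _ "length x - 1 - s"], rule exI[of _ "length x - 1 - s'"])
      using h r by auto
  next
    case 3
    then obtain s s' where h: "length x - b \<le> s" "length x - b \<le> s'" "s < length x" "s' < length x" "y = swp s s' x" by blast
    have r: "rev y = swp (length x - 1 - s) (length x - 1 - s') (rev x)" using h swp_rev by simp
    show ?thesis unfolding Estep_def
      apply (rule disjI2, rule disjI1)
      apply (rule exI[of _ "length x - 1 - s"], rule exI[of _ "length x - 1 - s'"])
      using h r by auto
  qed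
qed

lemma Eq_rev: "Eq c a b x y \<Longrightarrow> Eq c b a (rev x) (rev y)"
  unfolding Eq_def
proof (induction rule: rtranclp_induct)
  case base then show ?case by simp
next
  case (step y z) then show ?case using Estep_rev
    by (metis (no_types, lifting) rtranclp.rtrancl_into_rtrancl)
qed

lemma Eq_Kequiv: assumes "Eq c 1 1 x y" "x \<in> Sn n" shows "Kequiv c n x y"
proof -
  let ?R = "\<lambda>x y. x \<in> Sn n \<and> y \<in> Sn n \<and> (Kstep c x y \<or> Kstep c y x)"
  have "y \<in> Sn n \<and> ?R\<^sup>*\<^sup>* x y" using assms(1) unfolding Eq_def
  proof (induction rule: rtranclp_induct)
    case base then show ?case using assms(2) by simp
  next
    case (step y z)
    then have yS: "y \<in> Sn n" by simp
    have "set z = set y \<and> distinct z = distinct y" using step(2) Estep_pres by metis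
    then have zS: "z \<in> Sn n" using yS by (simp add: permutations_of_set_def)
    have "z = y \<or> Kstep c y z \<or> Kstep c z y"
    proof -
      { fix u w assume E: "Estep c 1 1 u w"
        have "w = u \<or> Kstep c u w"
        proof -
          consider "Kswap c u w" | "\<exists>s s'. s < 1 \<and> s' < 1 \<and> s < length u \<and> s' < length u \<and> w = swp s s' u"
           | "\<exists>s s'. length u - 1 \<le> s \<and> length u - 1 \<le> s' \<and> s < length u \<and> s' < length u \<and> w = swp s s' u"
            using E unfolding Estep_def by blast
          then show ?thesis
          proof cases
            case 1 then show ?thesis using Kswap_Kstep by blast
          next
            case 2 then show ?thesis by auto
          next
            case 3
            then obtain s s' where "length u - 1 \<le> s" "length u - 1 \<le> s'" "s < length u" "s' < length u" "w = swp s s' u" by blast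
            then have "s = s'" by linarith
            then show ?thesis using \<open>w = swp s s' u\<close> by simp
          qed
        qed }
      then show ?thesis using step(2) by metis
    qed
    then show ?case using step yS zS
      by (metis (no_types, lifting) rtranclp.rtrancl_into_rtrancl)
  qed
  then show ?thesis unfolding Kequiv_def using assms(2) by simp
qed

lemma perm_conn:
  assumes H: "\<And>x s s'. P x \<Longrightarrow> s \<in> I \<Longrightarrow> s' \<in> I \<Longrightarrow> s < length x \<Longrightarrow> s' < length x \<Longrightarrow>
                Eq c a b x (swp s s' x) \<and> P (swp s s' x)"
    and "P w" "distinct w" "distinct w'" "length w' = length w" "set w' = set w"
    and "\<And>i. i < length w \<Longrightarrow> i \<notin> I \<Longrightarrow> w!i = w'!i"
  shows "Eq c a b w w'"
  using assms(2-)
proof (induction "card {i. i < length w \<and> w!i \<noteq> w'!i}" arbitrary: w rule: less_induct)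
  case less
  show ?case
  proof (cases "{i. i < length w \<and> w!i \<noteq> w'!i} = {}")
    case True
    then have "w = w'" using less.prems by (auto intro: nth_equalityI)
    then show ?thesis by simp
  next
    case False
    then obtain i where i: "i < length w" "w!i \<noteq> w'!i" by auto
    have "w'!i \<in> set w" using less.prems i by (metis nth_mem)
    then obtain j where j: "j < length w" "w!j = w'!i" by (auto simp: in_set_conv_nth)
    have ij: "i \<noteq> j" using i j by auto
    have jm: "w!j \<noteq> w'!j" using j ij less.prems i
      by (metis nth_eq_iff_index_eq)
    have iI: "i \<in> I" using less.prems i by blast
    have jI: "j \<in> I" using less.prems j jm by blast
    define w2 where "w2 = swp i j w"
    have E: "Eq c a b w w2" and P2: "P w2" using H[OF less.prems(1) iI jI i(1) j(1)] by (auto simp: w2_def)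
    have w2n: "\<And>k. k < length w \<Longrightarrow> w2!k = (if k = j then w!i else if k = i then w!j else w!k)"
      using i j by (simp add: w2_def swp_nth)
    have sub: "{k. k < length w2 \<and> w2!k \<noteq> w'!k} \<subset> {k. k < length w \<and> w!k \<noteq> w'!k}"
    proof
      show "{k. k < length w2 \<and> w2!k \<noteq> w'!k} \<subseteq> {k. k < length w \<and> w!k \<noteq> w'!k}"
      proof (clarify)
        fix k assume k: "k < length w2" "w2!k \<noteq> w'!k"
        then have kl: "k < length w" by (simp add: w2_def)
        show "k < length w \<and> w!k \<noteq> w'!k"
        proof (cases "k = j")
          case True then show ?thesis using jm kl by simp
        next
          case False
          then show ?thesis using i kl k w2n[OF kl] by (cases "k = i") auto
        qed
      qed
      show "{k. k < length w2 \<and> w2!k \<noteq> w'!k} \<noteq> {k. k < length w \<and> w!k \<noteq> w'!k}"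
      proof
        assume e: "{k. k < length w2 \<and> w2!k \<noteq> w'!k} = {k. k < length w \<and> w!k \<noteq> w'!k}"
        have "w2!i = w'!i" using w2n[OF i(1)] j ij by simp
        then have "i \<notin> {k. k < length w2 \<and> w2!k \<noteq> w'!k}" by simp
        then show False using e i by blast
      qed
    qed
    have "card {k. k < length w2 \<and> w2!k \<noteq> w'!k} < card {k. k < length w \<and> w!k \<noteq> w'!k}"
      by (rule psubset_card_mono[OF _ sub]) simp
    moreover have "Eq c a b w2 w'"
    proof (rule less.hyps[OF calculation P2])
      show "distinct w2" using less.prems i j by (simp add: w2_def)
      show "distinct w'" using less.prems by simp
      show "length w' = length w2" using less.prems by (simp add: w2_def)
      show "set w' = set w2" using less.prems i j by (simp add: w2_def)
      fix k assume k: "k < length w2" "k \<notin> I"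
      then have "k \<noteq> i" "k \<noteq> j" "k < length w" using iI jI by (auto simp: w2_def)
      then show "w2!k = w'!k" using w2n less.prems(6) k by simp
    qed
    ultimately show ?thesis using E Eq_trans by blast
  qed
qed

definition SW :: "nat \<Rightarrow> nat \<Rightarrow> nat \<Rightarrow> (nat list \<Rightarrow> bool) \<Rightarrow> nat \<Rightarrow> nat \<Rightarrow> bool" where
  "SW c a b P s s' \<longleftrightarrow> (\<forall>x. P x \<longrightarrow> Eq c a b x (swp s s' x))"

lemma SW_sym: "SW c a b P s s' \<Longrightarrow> SW c a b P s' s"
  by (simp add: SW_def swp_comm)

lemma SW_refl: "SW c a b P s s"
  by (simp add: SW_def)

lemma SW_trans:
  assumes N: "\<And>x. P x \<Longrightarrow> length x = N" and cl: "\<And>x s s'. P x \<Longrightarrow> s \<in> I \<Longrightarrow> s' \<in> I \<Longrightarrow> P (swp s s' x)"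
    and I: "I \<subseteq> {..<N}" and inI: "s \<in> I" "t \<in> I" "s' \<in> I"
    and h: "SW c a b P s t" "SW c a b P t s'"
  shows "SW c a b P s s'"
proof (cases "s = s' \<or> s = t \<or> t = s'")
  case True then show ?thesis using h SW_refl by auto
next
  case False
  show ?thesis unfolding SW_def
  proof (intro allI impI)
    fix x assume Px: "P x"
    have l: "s < length x" "t < length x" "s' < length x" using N[OF Px] I inI by auto
    have P1: "P (swp s t x)" using cl Px inI by auto
    have P2: "P (swp t s' (swp s t x))" using cl P1 inI by auto
    have "Eq c a b x (swp s t x)" using h(1) Px by (simp add: SW_def)
    moreover have "Eq c a b (swp s t x) (swp t s' (swp s t x))" using h(2) P1 by (simp add: SW_def)
    moreover have "Eq c a b (swp t s' (swp s t x)) (swp s t (swp t s' (swp s t x)))" using h(1) P2 by (simp add: SW_def)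
    moreover have "swp s t (swp t s' (swp s t x)) = swp s s' x" using swp_conj l False by auto
    ultimately show "Eq c a b x (swp s s' x)" using Eq_trans by metis
  qed
qed

lemma SW_hub:
  assumes N: "\<And>x. P x \<Longrightarrow> length x = N" and cl: "\<And>x s s'. P x \<Longrightarrow> s \<in> I \<Longrightarrow> s' \<in> I \<Longrightarrow> P (swp s s' x)"
    and I: "I \<subseteq> {..<N}" and hI: "h \<in> I" and hub: "\<And>p. p \<in> I \<Longrightarrow> SW c a b P p h"
    and inI: "s \<in> I" "s' \<in> I"
  shows "SW c a b P s s'"
  using SW_trans[OF N cl I inI(1) hI inI(2) hub[OF inI(1)] SW_sym[OF hub[OF inI(2)]]] by blast

lemma win_swap:
  assumes d: "distinct x" and m0: "\<And>i. 0 < i \<Longrightarrow> i < length x \<Longrightarrow> x!0 < x!i"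
    and q: "q \<le> a - 1" "1 \<le> a" "q + c < length x"
    and ss: "q < s" "s \<le> q + c" "q < s'" "s' \<le> q + c"
  shows "Eq c a b x (swp s s' x)"
proof (cases "q = 0")
  case True
  have "KF c x 0 s s'" unfolding KF_def using m0 q ss True by auto
  then have "Kswap c x (swp s s' x)" unfolding Kswap_def using d q True by blast
  then show ?thesis by (rule Eq_K)
next
  case False
  define x1 where "x1 = swp 0 q x"
  have ql: "q < length x" "0 < length x" using q by auto
  have E1: "Eq c a b x x1" unfolding x1_def using q ql by (intro Eq_F) auto
  have l1: "length x1 = length x" by (simp add: x1_def)
  have d1: "distinct x1" using d ql by (simp add: x1_def)
  have KF1: "KF c x1 q s s'" unfolding KF_def
  proof (intro conjI)
    show "\<forall>i. q < i \<and> i \<le> q + c \<longrightarrow> x1!q < x1!i"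
    proof (intro allI impI)
      fix i assume i: "q < i \<and> i \<le> q + c"
      then have il: "i < length x" "i \<noteq> 0" "i \<noteq> q" using q by auto
      have "x1!q = x!0" using ql by (simp add: x1_def swp_nth)
      moreover have "x1!i = x!i" using ql il by (simp add: x1_def swp_nth)
      ultimately show "x1!q < x1!i" using m0 il by simp
    qed
  qed (use ss in auto)
  have "q + c < length x1" using l1 q by simp
  then have "Kswap c x1 (swp s s' x1)" unfolding Kswap_def using d1 KF1 by blast
  then have E2: "Eq c a b x1 (swp s s' x1)" by (rule Eq_K)
  have E3: "Eq c a b (swp s s' x1) (swp 0 q (swp s s' x1))"
    using q ql l1 by (intro Eq_F) auto
  have "swp 0 q (swp s s' x1) = swp s s' x"
    unfolding x1_def using q ss ql False by (intro swp_conj2) auto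
  then show ?thesis using E1 E2 E3 Eq_trans by metis
qed

lemma region_swap:
  assumes c1: "1 \<le> c" and a1: "1 \<le> a" and ca: "c = 1 \<longrightarrow> a = 1"
    and d: "distinct v" and mn: "\<And>i. 0 < i \<Longrightarrow> i < length v \<Longrightarrow> v!0 < v!i"
    and len: "c + 1 \<le> length v \<or> length v \<le> a \<or> length v \<le> b"
    and s: "1 \<le> s" "s \<le> a + c - 1" "s < length v" and s': "1 \<le> s'" "s' \<le> a + c - 1" "s' < length v"
  shows "Eq c a b v (swp s s' v)"
proof -
  define N where "N = length v"
  have vne: "0 < N" using s N_def by auto
  define m where "m = v!0"
  have mmin: "\<And>y. y \<in> set v \<Longrightarrow> y \<noteq> m \<Longrightarrow> m < y"
  proof -
    fix y assume "y \<in> set v" "y \<noteq> m"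
    then obtain i where "i < length v" "v!i = y" "i \<noteq> 0" by (auto simp: in_set_conv_nth m_def)
    then show "m < y" using mn unfolding m_def by auto
  qed
  consider "N \<le> a" | "N \<le> b" | "c + 1 \<le> N" "a < N" using len N_def by linarith
  then show ?thesis
  proof cases
    case 1 then show ?thesis using s s' by (intro Eq_F) (auto simp: N_def)
  next
    case 2 then show ?thesis using s s' by (intro Eq_B) (auto simp: N_def)
  next
    case 3
    define P where "P = (\<lambda>x. length x = N \<and> distinct x \<and> x!0 = m \<and> set x = set v)"
    define e where "e = min (a + c - 1) (N - 1)"
    define I where "I = {1..e}"
    have PN: "\<And>x. P x \<Longrightarrow> length x = N" by (simp add: P_def)
    have IN: "I \<subseteq> {..<N}" using vne by (auto simp: I_def e_def)
    have cl: "\<And>x s s'. P x \<Longrightarrow> s \<in> I \<Longrightarrow> s' \<in> I \<Longrightarrow> P (swp s s' x)"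
    proof -
      fix x s s' assume Px: "P x" and sI: "s \<in> I" "s' \<in> I"
      then have h: "1 \<le> s" "1 \<le> s'" "s < N" "s' < N" using IN by (auto simp: I_def)
      then have "swp s s' x ! 0 = x ! 0" using Px by (simp add: P_def swp_nth)
      then show "P (swp s s' x)" using Px h by (simp add: P_def)
    qed
    have Pmin: "\<And>i. 0 < i \<Longrightarrow> i < length x \<Longrightarrow> x!0 < x!i" if Px: "P x" for x
    proof -
      fix i assume i: "0 < i" "i < length x"
      have h: "length x = N" "distinct x" "x!0 = m" "set x = set v" using Px by (auto simp: P_def)
      have "x!i \<in> set v" using h i by (metis nth_mem)
      moreover have "x!i \<noteq> m" using nth_eq_iff_index_eq[of x i 0] i h by auto
      ultimately show "x!0 < x!i" using mmin h by simp
    qed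
    have W: "SW c a b P s s'" if q: "q \<le> a - 1" "q + c \<le> N - 1" and ss: "q < s" "s \<le> q + c" "q < s'" "s' \<le> q + c"
      for q s s'
      unfolding SW_def
    proof (intro allI impI)
      fix x assume Px: "P x"
      have "q + c < length x" using q vne PN[OF Px] by linarith
      then show "Eq c a b x (swp s s' x)"
        using win_swap[of x q a c s s' b] Px Pmin[OF Px] q(1) a1 ss by (simp add: P_def)
    qed
    have Fs: "SW c a b P s s'" if "1 \<le> s" "s \<le> a - 1" "1 \<le> s'" "s' \<le> a - 1" for s s'
      unfolding SW_def
    proof (intro allI impI)
      fix x assume Px: "P x"
      have "s < length x" "s' < length x" using that 3 PN[OF Px] by linarith+
      then show "Eq c a b x (swp s s' x)" using that by (intro Eq_F) auto
    qed
    have ee: "e \<le> a + c - 1" "e \<le> N - 1" by (auto simp: e_def)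
    have all: "SW c a b P s s'" if sI: "s \<in> I" "s' \<in> I" for s s'
    proof (cases "e \<le> c")
      case True
      have "1 \<le> s" "s \<le> e" "1 \<le> s'" "s' \<le> e" using sI by (auto simp: I_def)
      then show ?thesis using True 3 ee by (intro W[of 0]) auto
    next
      case False
      define q0 where "q0 = e - c"
      have ce: "c < e" using False by simp
      have q0: "1 \<le> q0" "q0 \<le> a - 1" "q0 + c = e" using ce ee unfolding q0_def by linarith+
      have c2: "2 \<le> c" using q0 ca c1 by auto
      have hub: "SW c a b P p q0" if p: "p \<in> I" for p
      proof -
        have p1: "1 \<le> p" "p \<le> e" using p by (auto simp: I_def)
        show ?thesis
        proof (cases "p \<le> q0")
          case True then show ?thesis using p1 q0 by (intro Fs) auto
        next
          case False
          show ?thesis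
          proof (cases "p = e")
            case False2: False
            have "q0 - 1 \<le> a - 1" "q0 - 1 + c \<le> N - 1" "q0 - 1 < q0" "q0 \<le> q0 - 1 + c"
                 "q0 - 1 < p" "p \<le> q0 - 1 + c" using q0 c2 ee p1 False False2 by linarith+
            then show ?thesis using SW_sym W[of "q0 - 1" q0 p] by blast
          next
            case True
            have A: "SW c a b P e (q0 + 1)"
              using q0 c2 ee by (intro W[of q0]) auto
            have "q0 - 1 \<le> a - 1" "q0 - 1 + c \<le> N - 1" "q0 - 1 < q0" "q0 \<le> q0 - 1 + c"
                 "q0 - 1 < q0 + 1" "q0 + 1 \<le> q0 - 1 + c" using q0 c2 ee by linarith+
            then have B: "SW c a b P (q0 + 1) q0" using SW_sym W[of "q0 - 1" q0 "q0 + 1"] by blast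
            have "e \<in> I" "q0 + 1 \<in> I" "q0 \<in> I" using q0 c2 by (auto simp: I_def)
            then show ?thesis using SW_trans[OF PN cl IN _ _ _ A B] True by blast
          qed
        qed
      qed
      have "q0 \<in> I" using q0 by (auto simp: I_def)
      then show ?thesis using SW_hub[OF PN cl IN _ hub sI] by blast
    qed
    have "s \<in> I" "s' \<in> I" using s s' by (auto simp: I_def e_def N_def)
    then have "SW c a b P s s'" by (rule all)
    moreover have "P v" by (simp add: P_def N_def m_def d)
    ultimately show ?thesis by (simp add: SW_def)
  qed
qed

lemma KF_Cons: "KF c Y q s s' \<Longrightarrow> KF c (m # Y) (Suc q) (Suc s) (Suc s')"
  unfolding KF_def
proof (intro conjI allI impI)
  fix i assume h: "(\<forall>i. q < i \<and> i \<le> q + c \<longrightarrow> Y ! q < Y ! i) \<and> q < s \<and> s \<le> q + c \<and> q < s' \<and> s' \<le> q + c"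
    and i: "Suc q < i \<and> i \<le> Suc q + c"
  then obtain i' where "i = Suc i'" by (cases i) auto
  then show "(m # Y) ! Suc q < (m # Y) ! i" using h i by auto
qed auto

lemma KL_Cons: "KL c Y q s s' \<Longrightarrow> KL c (m # Y) (Suc q) (Suc s) (Suc s')"
  unfolding KL_def
proof (intro conjI allI impI)
  fix i assume h: "(\<forall>i. q \<le> i \<and> i < q + c \<longrightarrow> Y ! (q + c) < Y ! i) \<and> q \<le> s \<and> s < q + c \<and> q \<le> s' \<and> s' < q + c"
    and i: "Suc q \<le> i \<and> i < Suc q + c"
  then obtain i' where "i = Suc i'" by (cases i) auto
  then show "(m # Y) ! (Suc q + c) < (m # Y) ! i" using h i by auto
qed auto

lemma Kswap_Cons: assumes "Kswap c Y1 Y2" "m \<notin> set Y1" shows "Kswap c (m # Y1) (m # Y2)"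
proof -
  obtain q s s' where q: "q + c < length Y1" and y: "Y2 = swp s s' Y1" and K: "KF c Y1 q s s' \<or> KL c Y1 q s s'"
    and d: "distinct Y1" using assms unfolding Kswap_def by blast
  have "m # Y2 = swp (Suc s) (Suc s') (m # Y1)" using y by (simp add: swp_Cons)
  moreover have "KF c (m # Y1) (Suc q) (Suc s) (Suc s') \<or> KL c (m # Y1) (Suc q) (Suc s) (Suc s')"
    using K KF_Cons KL_Cons by blast
  moreover have "Suc q + c < length (m # Y1)" using q by simp
  moreover have "distinct (m # Y1)" using d assms(2) by simp
  ultimately show ?thesis unfolding Kswap_def by blast
qed

lemma lift_step:
  assumes E: "Estep c (a + c - 1) b Y1 Y2" and d: "distinct (m # Y1)" and mn: "\<forall>y\<in>set Y1. m < y"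
    and c1: "1 \<le> c" and a1: "1 \<le> a" and ca: "c = 1 \<longrightarrow> a = 1"
    and len: "c + 1 \<le> length (m # Y1) \<or> length (m # Y1) \<le> a \<or> length (m # Y1) \<le> b"
  shows "Eq c a b (m # Y1) (m # Y2)"
proof -
  consider "Kswap c Y1 Y2" | "\<exists>s s'. s < a + c - 1 \<and> s' < a + c - 1 \<and> s < length Y1 \<and> s' < length Y1 \<and> Y2 = swp s s' Y1"
    | "\<exists>s s'. length Y1 - b \<le> s \<and> length Y1 - b \<le> s' \<and> s < length Y1 \<and> s' < length Y1 \<and> Y2 = swp s s' Y1"
    using E unfolding Estep_def by blast
  then show ?thesis
  proof cases
    case 1 then show ?thesis using Kswap_Cons d by (intro Eq_K) auto
  next
    case 2
    then obtain s s' where h: "s < a + c - 1" "s' < a + c - 1" "s < length Y1" "s' < length Y1" "Y2 = swp s s' Y1" by blast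
    have mn': "\<And>i. 0 < i \<Longrightarrow> i < length (m # Y1) \<Longrightarrow> (m # Y1)!0 < (m # Y1)!i"
    proof -
      fix i assume "0 < i" "i < length (m # Y1)"
      then obtain i' where "i = Suc i'" "i' < length Y1" by (cases i) auto
      then show "(m # Y1)!0 < (m # Y1)!i" using mn by simp
    qed
    have "Eq c a b (m # Y1) (swp (Suc s) (Suc s') (m # Y1))"
      by (rule region_swap[OF c1 a1 ca d mn' len]) (use h in auto)
    then show ?thesis using h by (simp add: swp_Cons)
  next
    case 3
    then obtain s s' where h: "length Y1 - b \<le> s" "length Y1 - b \<le> s'" "s < length Y1" "s' < length Y1" "Y2 = swp s s' Y1" by blast
    have "Eq c a b (m # Y1) (swp (Suc s) (Suc s') (m # Y1))"
      by (rule Eq_B) (use h in auto)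
    then show ?thesis using h by (simp add: swp_Cons)
  qed
qed

lemma lift:
  assumes E: "Eq c (a + c - 1) b Y Y'" and d: "distinct (m # Y)" and mn: "\<forall>y\<in>set Y. m < y"
    and c1: "1 \<le> c" and a1: "1 \<le> a" and ca: "c = 1 \<longrightarrow> a = 1"
    and len: "c + 1 \<le> length (m # Y) \<or> length (m # Y) \<le> a \<or> length (m # Y) \<le> b"
  shows "Eq c a b (m # Y) (m # Y')"
  using E unfolding Eq_def[of c "a + c - 1"]
proof (induction rule: rtranclp_induct)
  case base then show ?case by simp
next
  case (step Y1 Y2)
  have "Eq c (a + c - 1) b Y Y1" using step(1) unfolding Eq_def .
  then have p1: "set Y1 = set Y" "length Y1 = length Y" "distinct Y1 = distinct Y" using Eq_pres by metis+
  have "Eq c a b (m # Y1) (m # Y2)"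
  proof (cases "Estep c (a + c - 1) b Y1 Y2")
    case True
    then show ?thesis using lift_step[OF True _ _ c1 a1 ca] d mn len p1 by simp
  next
    case False
    then have E2: "Estep c (a + c - 1) b Y2 Y1" using step(2) by blast
    have p2: "set Y2 = set Y1" "length Y2 = length Y1" "distinct Y2 = distinct Y1" using Estep_pres[OF E2] by metis+
    have "Eq c a b (m # Y2) (m # Y1)" using lift_step[OF E2 _ _ c1 a1 ca] d mn len p1 p2 by simp
    then show ?thesis by (rule Eq_sym)
  qed
  then show ?case using step(3) Eq_trans by blast
qed

lemma remove1_eq_take_drop:
  assumes "distinct v" "pm < length v" "v!pm = m"
  shows "remove1 m v = take pm v @ drop (Suc pm) v"
proof -
  have v: "v = take pm v @ m # drop (Suc pm) v" using assms by (metis id_take_nth_drop)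
  have "m \<notin> set (take pm v)" using assms by (metis v distinct_append distinct.simps(2) not_distinct_conv_prefix) 
  then show ?thesis by (subst v) (simp add: remove1_append)
qed

lemma remove1_nth:
  assumes "distinct v" "pm < length v" "v!pm = m" "k < length v - 1"
  shows "remove1 m v ! k = (if k < pm then v!k else v!(Suc k))"
  using assms by (simp add: remove1_eq_take_drop nth_append min_def)

definition frontC :: "nat \<Rightarrow> nat set \<Rightarrow> nat \<Rightarrow> nat list \<Rightarrow> bool" where
  "frontC c L a v \<longleftrightarrow> (\<forall>i < card L. \<exists>p < length v. p < a + c*i \<and> v!p = sorted_list_of_set L ! i)"

definition backC :: "nat \<Rightarrow> nat set \<Rightarrow> nat \<Rightarrow> nat list \<Rightarrow> bool" where
  "backC c R b v \<longleftrightarrow> (\<forall>i < card R. \<exists>p < length v. length v - (b + c*i) \<le> p \<and> v!p = sorted_list_of_set R ! i)"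

definition Good :: "nat \<Rightarrow> nat \<Rightarrow> nat \<Rightarrow> nat set \<Rightarrow> nat set \<Rightarrow> nat list \<Rightarrow> bool" where
  "Good c a b L R v \<longleftrightarrow> finite L \<and> finite R \<and> L \<inter> R = {} \<and> distinct v \<and> L \<union> R \<subseteq> set v \<and>
     (\<forall>x\<in>set v - (L \<union> R). \<forall>y\<in>L \<union> R. y < x) \<and> 1 \<le> c \<and> 1 \<le> a \<and> 1 \<le> b \<and>
     (c = 1 \<longrightarrow> a = 1 \<and> b = 1) \<and> length v + 1 \<le> a + b + c * (card L + card R) \<and>
     (c + 1 \<le> length v \<or> length v \<le> a \<or> length v \<le> b) \<and> frontC c L a v \<and> backC c R b v"

lemma front_rev: "backC c L a v \<Longrightarrow> frontC c L a (rev v)"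
  unfolding frontC_def backC_def
proof (intro allI impI)
  fix i assume h: "\<forall>i<card L. \<exists>p<length v. length v - (a + c * i) \<le> p \<and> v ! p = sorted_list_of_set L ! i" "i < card L"
  then obtain p where p: "p < length v" "length v - (a + c * i) \<le> p" "v ! p = sorted_list_of_set L ! i" by blast
  show "\<exists>p<length (rev v). p < a + c * i \<and> rev v ! p = sorted_list_of_set L ! i"
    using p by (intro exI[of _ "length v - 1 - p"]) (auto simp: rev_nth)
qed

lemma back_rev: "frontC c R b v \<Longrightarrow> backC c R b (rev v)"
  unfolding frontC_def backC_def
proof (intro allI impI)
  fix i assume h: "\<forall>i<card R. \<exists>p<length v. p < b + c * i \<and> v ! p = sorted_list_of_set R ! i" "i < card R"
  then obtain p where p: "p < length v" "p < b + c * i" "v ! p = sorted_list_of_set R ! i" by blast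
  show "\<exists>p<length (rev v). length (rev v) - (b + c * i) \<le> p \<and> rev v ! p = sorted_list_of_set R ! i"
    using p by (intro exI[of _ "length v - 1 - p"]) (auto simp: rev_nth)
qed

lemma Good_rev: "Good c a b L R v \<Longrightarrow> Good c b a R L (rev v)"
  unfolding Good_def using front_rev back_rev by (auto simp: add.commute)

lemma Eq_rev_back: "Eq c b a (rev v) (rev v') \<Longrightarrow> Eq c a b v v'"
  using Eq_rev[of c b a "rev v" "rev v'"] by simp

lemma base_case:
  assumes G: "Good c a b {} {} v" and G': "Good c a b {} {} v'" and sv: "set v = set v'"
  shows "Eq c a b v v'"
proof -
  define N where "N = length v"
  have d: "distinct v" "distinct v'" using G G' by (auto simp: Good_def)
  have lv': "length v' = N" using d sv distinct_card N_def by metis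
  have Nab: "N + 1 \<le> a + b" "1 \<le> a" "1 \<le> b" using G by (auto simp: Good_def N_def)
  define P where "P = (\<lambda>x::nat list. distinct x \<and> length x = N)"
  define I where "I = {..<N}"
  have PN: "\<And>x. P x \<Longrightarrow> length x = N" by (simp add: P_def)
  have cl: "\<And>x s s'. P x \<Longrightarrow> s \<in> I \<Longrightarrow> s' \<in> I \<Longrightarrow> P (swp s s' x)"
    by (auto simp: P_def I_def)
  have IN: "I \<subseteq> {..<N}" by (simp add: I_def)
  show ?thesis
  proof (cases "N = 0")
    case True then show ?thesis using lv' N_def by simp
  next
    case False
    define h where "h = N - b"
    have hI: "h \<in> I" using False Nab by (auto simp: h_def I_def)
    have hub: "SW c a b P p h" if "p \<in> I" for p
      unfolding SW_def
    proof (intro allI impI)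
      fix x assume Px: "P x"
      have pl: "p < length x" "h < length x" using that hI Px by (auto simp: I_def P_def)
      show "Eq c a b x (swp p h x)"
      proof (cases "p < a")
        case True
        have "h < a" using Nab False by (simp add: h_def)
        then show ?thesis using True pl by (intro Eq_F)
      next
        case False
        then have "length x - b \<le> p" "length x - b \<le> h" using Nab Px by (auto simp: P_def h_def)
        then show ?thesis using pl by (intro Eq_B)
      qed
    qed
    have all: "\<And>s s'. s \<in> I \<Longrightarrow> s' \<in> I \<Longrightarrow> SW c a b P s s'"
      using SW_hub[OF PN cl IN hI hub] by blast
    show ?thesis
    proof (rule perm_conn[of P I c a b v v'])
      fix x s s' assume "P x" "s \<in> I" "s' \<in> I" "s < length x" "s' < length x"
      then show "Eq c a b x (swp s s' x) \<and> P (swp s s' x)" using all cl by (auto simp: SW_def)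
    qed (use d lv' sv in \<open>auto simp: P_def N_def I_def\<close>)
  qed
qed

lemma peel:
  assumes G: "Good c a b L R v" and mdef: "m = Min (L \<union> R)" and mL: "m \<in> L"
  shows "Good c (a + c - 1) b (L - {m}) R (remove1 m v) \<and> Eq c a b v (m # remove1 m v) \<and>
    (\<forall>y\<in>set (remove1 m v). m < y) \<and> distinct (m # remove1 m v) \<and>
    (c + 1 \<le> length (m # remove1 m v) \<or> length (m # remove1 m v) \<le> a \<or> length (m # remove1 m v) \<le> b)"
proof -
  have fL: "finite L" and fR: "finite R" and dj: "L \<inter> R = {}" and d: "distinct v" and sub: "L \<union> R \<subseteq> set v"
    and na: "\<forall>x\<in>set v - (L \<union> R). \<forall>y\<in>L \<union> R. y < x" and c1: "1 \<le> c" and a1: "1 \<le> a" and b1: "1 \<le> b"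
    and ca: "c = 1 \<longrightarrow> a = 1 \<and> b = 1" and len: "length v + 1 \<le> a + b + c * (card L + card R)"
    and len2: "c + 1 \<le> length v \<or> length v \<le> a \<or> length v \<le> b"
    and fr: "frontC c L a v" and bk: "backC c R b v"
    using G unfolding Good_def by blast+
  define L' where "L' = L - {m}"
  define Y where "Y = remove1 m v"
  have Lne: "L \<noteq> {}" using mL by auto
  have mmin: "\<And>y. y \<in> L \<union> R \<Longrightarrow> m \<le> y" using fL fR mdef by simp
  have mMin: "Min L = m" using mmin mL fL by (intro Min_eqI) auto
  have sL: "sorted_list_of_set L = m # sorted_list_of_set L'"
    using sorted_list_of_set_nonempty[OF fL Lne] mMin by (simp add: L'_def)
  have cL: "card L = Suc (card L')" using fL mL unfolding L'_def using card_Suc_Diff1 by metis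
  obtain pm where pm: "pm < length v" "pm < a" "v!pm = m"
    using fr sL cL unfolding frontC_def by fastforce
  have mR: "m \<notin> R" using mL dj by auto
  have lY: "length Y = length v - 1" using pm nth_mem[OF pm(1)] by (simp add: Y_def length_remove1)
  have sY: "set Y = set v - {m}" using d by (simp add: Y_def)
  have dY: "distinct Y" using d by (simp add: Y_def)
  have Ynth: "\<And>k. k < length v - 1 \<Longrightarrow> Y!k = (if k < pm then v!k else v!(Suc k))"
    using remove1_nth[OF d pm(1) pm(3)] by (simp add: Y_def)
  have pmap: "\<exists>k < length Y. Y!k = v!p \<and> (k = p \<and> p < pm \<or> k + 1 = p \<and> pm < p)"
    if p: "p < length v" "p \<noteq> pm" for p
  proof (cases "p < pm")
    case True then show ?thesis using p pm Ynth lY by (intro exI[of _ p]) auto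
  next
    case False
    then have "pm < p" using p by simp
    then show ?thesis using p pm Ynth lY by (intro exI[of _ "p - 1"]) auto
  qed
  have notm: "\<And>p. p < length v \<Longrightarrow> v!p \<noteq> m \<Longrightarrow> p \<noteq> pm" using pm by auto
  have mlt: "\<forall>y\<in>set Y. m < y"
  proof
    fix y assume "y \<in> set Y"
    then have y: "y \<in> set v" "y \<noteq> m" using sY by auto
    show "m < y"
    proof (cases "y \<in> L \<union> R")
      case True then show ?thesis using mmin y by (simp add: order_less_le)
    next
      case False then show ?thesis using na y mL by auto
    qed
  qed
  have GY: "Good c (a + c - 1) b L' R Y"
    unfolding Good_def
  proof (intro conjI)
    show "finite L'" using fL by (simp add: L'_def)
    show "L' \<inter> R = {}" using dj by (auto simp: L'_def)
    show "L' \<union> R \<subseteq> set Y" using sub sY mR by (auto simp: L'_def)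
    show "\<forall>x\<in>set Y - (L' \<union> R). \<forall>y\<in>L' \<union> R. y < x" using na sY by (auto simp: L'_def)
    show "1 \<le> a + c - 1" using a1 c1 by simp
    show "c = 1 \<longrightarrow> a + c - 1 = 1 \<and> b = 1" using ca by simp
    show "length Y + 1 \<le> a + c - 1 + b + c * (card L' + card R)"
      using len lY cL pm c1 by (simp add: algebra_simps)
    show "c + 1 \<le> length Y \<or> length Y \<le> a + c - 1 \<or> length Y \<le> b" using a1 by linarith
    show "frontC c L' (a + c - 1) Y"
      unfolding frontC_def
    proof (intro allI impI)
      fix i assume i: "i < card L'"
      then obtain p where p: "p < length v" "p < a + c * Suc i" "v!p = sorted_list_of_set L ! Suc i"
        using fr cL unfolding frontC_def by auto
      have vp: "v!p = sorted_list_of_set L' ! i" using p sL by simp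
      have "sorted_list_of_set L' ! i \<in> L'" using i fL
        by (metis L'_def finite_Diff length_sorted_list_of_set nth_mem set_sorted_list_of_set)
      then have "v!p \<noteq> m" using vp by (simp add: L'_def)
      then obtain k where k: "k < length Y" "Y!k = v!p" "k = p \<and> p < pm \<or> k + 1 = p \<and> pm < p"
        using pmap[OF p(1) notm[OF p(1)]] by blast
      have "k < a + c - 1 + c * i" using k p pm c1 by auto
      then show "\<exists>p<length Y. p < a + c - 1 + c * i \<and> Y ! p = sorted_list_of_set L' ! i"
        using k vp by auto
    qed
    show "backC c R b Y"
      unfolding backC_def
    proof (intro allI impI)
      fix i assume i: "i < card R"
      then obtain p where p: "p < length v" "length v - (b + c * i) \<le> p" "v!p = sorted_list_of_set R ! i"
        using bk unfolding backC_def by auto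
      have "sorted_list_of_set R ! i \<in> R" using i fR
        by (metis length_sorted_list_of_set nth_mem set_sorted_list_of_set)
      then have "v!p \<noteq> m" using p mR by auto
      then obtain k where k: "k < length Y" "Y!k = v!p" "k = p \<and> p < pm \<or> k + 1 = p \<and> pm < p"
        using pmap[OF p(1) notm[OF p(1)]] by blast
      have "length Y - (b + c * i) \<le> k" using k p lY by auto
      then show "\<exists>p<length Y. length Y - (b + c * i) \<le> p \<and> Y ! p = sorted_list_of_set R ! i"
        using k p by auto
    qed
  qed (use fR dY c1 b1 in auto)
  have dmY: "distinct (m # Y)" using dY sY by simp
  have lmY: "length (m # Y) = length v" using lY pm by simp
  have EY: "Eq c a b v (m # Y)"
  proof (rule perm_conn[of "\<lambda>x. distinct x \<and> length x = length v" "{..<a}" c a b v "m # Y"])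
    fix x :: "nat list" and s s' assume "distinct x \<and> length x = length v" "s \<in> {..<a}" "s' \<in> {..<a}" "s < length x" "s' < length x"
    then show "Eq c a b x (swp s s' x) \<and> distinct (swp s s' x) \<and> length (swp s s' x) = length v"
      using Eq_F[of s a s' x c b] by simp
  next
    fix i assume i: "i < length v" "i \<notin> {..<a}"
    then have "pm < i" using pm by auto
    then show "v!i = (m # Y)!i" using i Ynth by (cases i) auto
  next
    have "m \<in> set v" using pm nth_mem by metis
    then show "set (m # Y) = set v" using sY by auto
  qed (use d dmY lmY in auto)
  show ?thesis using GY EY mlt dmY lmY len2 unfolding L'_def Y_def by simp
qed

lemma front_case:
  assumes IH: "\<And>a b L R v v'. card L + card R < n \<Longrightarrow> Good c a b L R v \<Longrightarrow> Good c a b L R v' \<Longrightarrow> set v = set v' \<Longrightarrow> Eq c a b v v'"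
    and n: "card L + card R = n" and G: "Good c a b L R v" and G': "Good c a b L R v'" and sv: "set v = set v'"
    and mdef: "m = Min (L \<union> R)" and mL: "m \<in> L"
  shows "Eq c a b v v'"
proof -
  note P = peel[OF G mdef mL] and P' = peel[OF G' mdef mL]
  have fL: "finite L" "finite R" using G by (auto simp: Good_def)
  have c1: "1 \<le> c" "1 \<le> a" "c = 1 \<longrightarrow> a = 1" using G by (auto simp: Good_def)
  have dv: "distinct v" "distinct v'" using G G' by (auto simp: Good_def)
  have "card (L - {m}) < card L" using fL mL by (meson card_Diff1_less)
  then have lt: "card (L - {m}) + card R < n" using n by simp
  have sY: "set (remove1 m v) = set (remove1 m v')" using sv dv by simp
  have "Eq c (a + c - 1) b (remove1 m v) (remove1 m v')"
    using IH[OF lt] P P' sY by blast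
  then have "Eq c a b (m # remove1 m v) (m # remove1 m v')"
    using lift[OF _ _ _ c1] P by blast
  moreover have "Eq c a b v (m # remove1 m v)" using P by blast
  moreover have "Eq c a b (m # remove1 m v') v'" using P' Eq_sym by blast
  ultimately show ?thesis using Eq_trans by metis
qed

lemma main:
  "Good c a b L R v \<Longrightarrow> Good c a b L R v' \<Longrightarrow> set v = set v' \<Longrightarrow> Eq c a b v v'"
proof (induction "card L + card R" arbitrary: a b L R v v' rule: less_induct)
  case less
  have fL: "finite L" "finite R" using less.prems by (auto simp: Good_def)
  show ?case
  proof (cases "card L + card R = 0")
    case True
    then have "L = {}" "R = {}" using fL by auto
    then show ?thesis using base_case less.prems by blast
  next
    case False
    then have ne: "L \<union> R \<noteq> {}" by auto
    define m where "m = Min (L \<union> R)"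
    have mi: "m \<in> L \<union> R" using ne fL unfolding m_def by (intro Min_in) auto
    show ?thesis
    proof (cases "m \<in> L")
      case True
      show ?thesis by (rule front_case[OF less.hyps refl less.prems m_def True]) 
    next
      case False
      then have mR: "m \<in> R" using mi by auto
      have m2: "m = Min (R \<union> L)" by (simp add: m_def Un_commute)
      have "Eq c b a (rev v) (rev v')"
      proof (rule front_case[OF _ _ Good_rev[OF less.prems(1)] Good_rev[OF less.prems(2)] _ m2 mR])
        show "card R + card L = card L + card R" by simp
        show "set (rev v) = set (rev v')" using less.prems by simp
      next
        fix a b L' R' w w' assume "card L' + card R' < card L + card R" "Good c a b L' R' w" "Good c a b L' R' w'" "set w = set w'"
        then show "Eq c a b w w'" using less.hyps by blast
      qed
      then show ?thesis by (rule Eq_rev_back)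
    qed
  qed
qed

lemma Kequiv_sym: "Kequiv c n x y \<Longrightarrow> Kequiv c n y x"
proof -
  let ?R = "\<lambda>x y. x \<in> Sn n \<and> y \<in> Sn n \<and> (Kstep c x y \<or> Kstep c y x)"
  have "?R\<^sup>*\<^sup>* y x" if "?R\<^sup>*\<^sup>* x y" for x y
    using that
  proof (induction rule: rtranclp_induct)
    case base then show ?case by simp
  next
    case (step y z)
    have "?R z y" using step(2) by auto
    then show ?case using step.IH converse_rtranclp_into_rtranclp[of ?R z y x] by blast
  qed
  then show "Kequiv c n x y \<Longrightarrow> Kequiv c n y x" unfolding Kequiv_def by blast
qed

lemma Kequiv_trans: "Kequiv c n x y \<Longrightarrow> Kequiv c n y z \<Longrightarrow> Kequiv c n x z"
  unfolding Kequiv_def by (meson rtranclp_trans)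

lemma Kclass_eq: assumes "Kequiv c n x y" shows "Kclass c n x = Kclass c n y"
  unfolding Kclass_def using assms Kequiv_sym Kequiv_trans by blast

theorem lemma3p7:
  fixes c j k n :: nat and L :: "nat set"
  assumes "c \<ge> 1"
    and "L \<subseteq> {1..j+k}" and "card L = j"
    and "j + k \<le> n"
    and "c * k + c * j + 1 \<ge> n" and "n \<ge> c + 1"
  shows "g c j k n L = 1"
proof -
  define t where "t = j + k"
  define R where "R = {1..j+k} - L"
  have fL: "finite L" using assms(2) finite_subset by blast
  have fR: "finite R" by (simp add: R_def)
  have cR: "card R = k" using assms(2,3) fL by (simp add: R_def card_Diff_subset)
  have LR: "L \<union> R = {1..t}" using assms(2) by (auto simp: R_def t_def)
  have djLR: "L \<inter> R = {}" by (auto simp: R_def)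
  define S where "S = {w \<in> Sn n. squished c j k L w}"
  have good: "Good c 1 1 L R w" if w: "w \<in> S" for w
  proof -
    have wS: "set w = {1..n}" "distinct w" using w by (auto simp: S_def permutations_of_set_def)
    have lw: "length w = n" using wS distinct_card by fastforce
    have sq: "squished c j k L w" using w by (simp add: S_def)
    show ?thesis unfolding Good_def
    proof (intro conjI)
      show "L \<union> R \<subseteq> set w" using LR wS assms(4) by (auto simp: t_def)
      show "\<forall>x\<in>set w - (L \<union> R). \<forall>y\<in>L \<union> R. y < x" using LR wS by auto
      show "length w + 1 \<le> 1 + 1 + c * (card L + card R)" using lw assms cR by (simp add: algebra_simps)
      show "c + 1 \<le> length w \<or> length w \<le> 1 \<or> length w \<le> 1" using lw assms by simp
      show "frontC c L 1 w" unfolding frontC_def using sq assms(3) by (simp add: squished_def add.commute)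
      show "backC c R 1 w" unfolding backC_def using sq cR by (simp add: squished_def add.commute R_def)
    qed (use fL fR djLR wS assms(1) in auto)
  qed
  have equiv: "Kequiv c n w w'" if "w \<in> S" "w' \<in> S" for w w'
  proof -
    have "set w = set w'" using that by (auto simp: S_def permutations_of_set_def)
    then have "Eq c 1 1 w w'" using main good that by blast
    then show ?thesis using Eq_Kequiv that by (auto simp: S_def)
  qed
  define sL where "sL = sorted_list_of_set L"
  define sR where "sR = sorted_list_of_set R"
  define w0 where "w0 = sL @ [t+1..<n+1] @ rev sR"
  have lsL: "length sL = j" using assms(3) by (simp add: sL_def)
  have lsR: "length sR = k" using cR by (simp add: sR_def)
  have lw0: "length w0 = n" using lsL lsR assms(4) by (simp add: w0_def t_def)
  have w0S: "w0 \<in> Sn n"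
  proof -
    have "set w0 = L \<union> {t+1..<n+1} \<union> R" using fL fR by (auto simp: w0_def sL_def sR_def)
    also have "\<dots> = {1..n}"
    proof
      have "L \<subseteq> {1..t}" "R \<subseteq> {1..t}" using LR by auto
      then show "L \<union> {t+1..<n+1} \<union> R \<subseteq> {1..n}" using assms(4) by (auto simp: t_def)
      show "{1..n} \<subseteq> L \<union> {t+1..<n+1} \<union> R"
      proof
        fix x assume x: "x \<in> {1..n}"
        show "x \<in> L \<union> {t+1..<n+1} \<union> R"
        proof (cases "x \<le> t")
          case True then have "x \<in> L \<union> R" using LR x by auto
          then show ?thesis by auto
        next
          case False then show ?thesis using x by auto
        qed
      qed
    qed
    finally have s: "set w0 = {1..n}" .
    have "distinct w0"
    proof -
      have "set sL \<inter> set [t+1..<n+1] = {}" "set sL \<inter> set (rev sR) = {}" "set [t+1..<n+1] \<inter> set (rev sR) = {}"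
      proof -
        have "L \<subseteq> {1..t}" "R \<subseteq> {1..t}" using LR by auto
        then show "set sL \<inter> set [t+1..<n+1] = {}" "set sL \<inter> set (rev sR) = {}" "set [t+1..<n+1] \<inter> set (rev sR) = {}"
          using djLR fL fR by (auto simp: sL_def sR_def)
      qed
      moreover have "distinct sL" "distinct (rev sR)" "distinct [t+1..<n+1]" by (auto simp: sL_def sR_def)
      ultimately show ?thesis unfolding w0_def distinct_append set_append by blast
    qed
    then show ?thesis using s by (simp add: permutations_of_set_def)
  qed
  have w0sq: "squished c j k L w0"
    unfolding squished_def
  proof (intro conjI allI impI)
    fix i assume i: "i < j"
    have "w0 ! i = sL ! i" using i lsL by (simp add: w0_def nth_append)
    moreover have "i < c * i + 1" using assms(1) by (metis add.commute le_add2 less_Suc_eq_le mult_le_mono1 mult_1 plus_1_eq_Suc)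
    ultimately show "\<exists>p<length w0. p < c * i + 1 \<and> w0 ! p = sorted_list_of_set L ! i"
      using i lw0 assms(4) by (intro exI[of _ i]) (auto simp: sL_def)
  next
    fix i assume i: "i < k"
    define M where "M = [t+1..<n+1]"
    have lM: "length M = n - t" unfolding M_def length_upt by simp
    have idx: "n - 1 - i = length sL + (length M + (k - 1 - i))" using i assms(4) lsL lM by (simp add: t_def)
    have "w0 ! (length sL + (length M + (k - 1 - i))) = rev sR ! (k - 1 - i)"
      unfolding w0_def M_def[symmetric] by (simp only: nth_append_length_plus)
    then have "w0 ! (n - 1 - i) = rev sR ! (k - 1 - i)" using idx by simp
    also have "\<dots> = sR ! i" using i lsR by (simp add: rev_nth)
    finally have e: "w0 ! (n - 1 - i) = sR ! i" .
    have "n - (c * i + 1) \<le> n - 1 - i" using assms(1) by (simp add: diff_le_mono2 trans_le_add1)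
    then show "\<exists>p<length w0. length w0 - (c * i + 1) \<le> p \<and> w0 ! p = sorted_list_of_set ({1..j + k} - L) ! i"
      using e lw0 i assms(4) by (intro exI[of _ "n - 1 - i"]) (auto simp: sR_def R_def)
  qed
  have w0in: "w0 \<in> S" using w0S w0sq by (simp add: S_def)
  have "Kclass c n ` S = {Kclass c n w0}"
  proof
    show "Kclass c n ` S \<subseteq> {Kclass c n w0}" using equiv w0in Kclass_eq by blast
    show "{Kclass c n w0} \<subseteq> Kclass c n ` S" using w0in by blast
  qed
  then show ?thesis unfolding g_def S_def by simp
qed

end
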